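(* Let $l\ge3$ be an odd integer and let $(A,M)$ be any NIM-rep of the fusion ring $\mathrm{Gr}((A_1,l)_{\frac12})$. Then $(V_{l-1}\vartriangleright m_p,m_q)\le1$ for all $m_p,m_q\in M$.
   Context: For odd $l\ge3$, $\mathrm{Gr}((A_1,l)_{\frac12})$ is the commutative fusion ring with basis $\{V_0,V_2,V_4,\dots,V_{l-1}\}$ (unit $V_0$, every basis element self-dual) and multiplication $V_iV_j=\sum_k V_k$, the sum over all $k$ with $|i-j|\le k\le\min(i+j,2l-i-j)$ and $k\equiv i+j \pmod 2$. A NIM-rep of a fusion ring $(R,B)$ is a nonzero left $R$-module $A$, free over $\mathbb{Z}$ with a fixed basis $M$, such that each $b\vartriangleright m$ is a non-negative integer combination of elements of $M$ and $(b\vartriangleright m,m')=(m,b^*\vartriangleright m')$ for the symmetric bilinear form $(-,-)$ making $M$ orthonormal. *)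

theory Defs
  imports Main
begin

text \<open>Basis of Gr((A_1,l)_{1/2}), l odd: V_i for the indices i in {0,2,...,l-1}.\<close>
definition half_idx :: "nat \<Rightarrow> nat set" where
  "half_idx l = {i. even i \<and> i \<le> l - 1}"

text \<open>Structure constant: V_i V_j = sum of V_k with |i-j| <= k <= min(i+j, 2l-i-j), k = i+j mod 2.\<close>
definition half_fus :: "nat \<Rightarrow> nat \<Rightarrow> nat \<Rightarrow> nat \<Rightarrow> nat" where
  "half_fus l i j k =
     (if \<bar>int i - int j\<bar> \<le> int k \<and> int k \<le> min (int i + int j) (2 * int l - int i - int j)
         \<and> even (i + j + k) then 1 else 0)"

text \<open>A NIM-rep with basis M: N i m m' is the coefficient (V_i |> m, m') of m' in V_i |> m.
  Conditions: M nonempty; each V_i |> m is a finite non-negative integer combination of M;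
  V_0 acts as the identity; module axiom V_i |> (V_j |> m) = (V_i V_j) |> m;
  adjointness (V_i |> m, m') = (m, V_i^* |> m') with V_i^* = V_i.\<close>
definition half_nim_rep :: "nat \<Rightarrow> 'm set \<Rightarrow> (nat \<Rightarrow> 'm \<Rightarrow> 'm \<Rightarrow> nat) \<Rightarrow> bool" where
  "half_nim_rep l M N \<longleftrightarrow>
     M \<noteq> {} \<and>
     (\<forall>i\<in>half_idx l. \<forall>m\<in>M. finite {m'\<in>M. N i m m' \<noteq> 0}) \<and>
     (\<forall>m\<in>M. \<forall>m'\<in>M. N 0 m m' = (if m = m' then 1 else 0)) \<and>
     (\<forall>i\<in>half_idx l. \<forall>j\<in>half_idx l. \<forall>m\<in>M. \<forall>m'\<in>M.
        (\<Sum>m''\<in>{x\<in>M. N j m x \<noteq> 0}. N j m m'' * N i m'' m')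
          = (\<Sum>k\<in>half_idx l. half_fus l i j k * N k m m')) \<and>
     (\<forall>i\<in>half_idx l. \<forall>m\<in>M. \<forall>m'\<in>M. N i m m' = N i m' m)"

end

theory Submission
  imports Defs
begin

lemma fus_top:
  assumes "odd l" "l \<ge> 3" "even j" "j \<le> l - 1" "even k" "k \<le> l - 1"
  shows "half_fus l (l - 1) j k = (if k + j = l - 1 \<or> k + j = l + 1 then 1 else 0)"
proof -
  obtain a where a: "j = 2*a" using assms(3) by auto
  obtain b where b: "k = 2*b" using assms(5) by auto
  obtain c where c: "l = 2*c+1" using assms(1) oddE by blast
  have "even (l - 1 + j + k)" using a b c by simp
  moreover have "(\<bar>int (l - 1) - int j\<bar> \<le> int k \<and> int k \<le> min (int (l - 1) + int j) (2 * int l - int (l - 1) - int j))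
      \<longleftrightarrow> (k + j = l - 1 \<or> k + j = l + 1)"
    using assms(4,6) unfolding a b c by (simp add: abs_if) arith
  ultimately show ?thesis unfolding half_fus_def by auto
qed

definition cw :: "nat \<Rightarrow> nat \<Rightarrow> nat" where
  "cw l j = (j + 1) * (l + 1 - j)"

lemma cw_sum:
  assumes "odd l" "l \<ge> 3" "k \<in> half_idx l"
  shows "(\<Sum>j\<in>half_idx l. cw l j * half_fus l (l - 1) j k) + 2 = 2 * cw l k"
proof -
  have fin: "finite (half_idx l)" unfolding half_idx_def by auto
  have ek: "even k" "k \<le> l - 1" using assms unfolding half_idx_def by auto
  have "(\<Sum>j\<in>half_idx l. cw l j * half_fus l (l - 1) j k)
      = (\<Sum>j\<in>half_idx l. (if j = l - 1 - k then cw l j else 0) + (if j = l + 1 - k \<and> 2 \<le> k then cw l j else 0))"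
  proof (rule sum.cong[OF refl])
    fix j assume "j \<in> half_idx l"
    hence ej: "even j" "j \<le> l - 1" unfolding half_idx_def by auto
    show "cw l j * half_fus l (l - 1) j k = (if j = l - 1 - k then cw l j else 0) + (if j = l + 1 - k \<and> 2 \<le> k then cw l j else 0)"
      using fus_top[OF assms(1,2) ej ek] ek ej assms(1,2) by auto
  qed
  also have "\<dots> = cw l (l - 1 - k) + (if 2 \<le> k then cw l (l + 1 - k) else 0)"
  proof -
    have a: "l - 1 - k \<in> half_idx l" using ek assms(1) unfolding half_idx_def by auto
    have b: "2 \<le> k \<Longrightarrow> l + 1 - k \<in> half_idx l" using ek assms(1) unfolding half_idx_def by auto
    show ?thesis
      unfolding sum.distrib using a b fin
      by (cases "2 \<le> k") (simp_all add: sum.delta' if_distrib cong: if_cong)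
  qed
  finally have s: "(\<Sum>j\<in>half_idx l. cw l j * half_fus l (l - 1) j k) = cw l (l - 1 - k) + (if 2 \<le> k then cw l (l + 1 - k) else 0)" .
  define d where "d = l - 1 - k"
  have d: "l = k + 1 + d" using ek assms(2) unfolding d_def by simp
  show ?thesis
  proof (cases "2 \<le> k")
    case True
    have e: "l - 1 - k = d" "l + 1 - k = d + 2" using d by auto
    have "cw l d + cw l (d + 2) + 2 = 2 * cw l k" unfolding cw_def using True d by (simp add: algebra_simps)
    then show ?thesis unfolding s using True e by simp
  next
    case False
    with ek have "k = 0" by auto
    have "cw l (l - 1 - k) + 2 = 2 * cw l k" unfolding cw_def using \<open>k = 0\<close> d by (simp add: algebra_simps)
    then show ?thesis unfolding s using \<open>k = 0\<close> by simp
  qed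
qed

theorem proposition3p32:
  fixes l :: nat and M :: "'m set" and N :: "nat \<Rightarrow> 'm \<Rightarrow> 'm \<Rightarrow> nat"
  assumes "odd l" and "l \<ge> 3" and "half_nim_rep l M N"
    and "p \<in> M" and "q \<in> M"
  shows "N (l - 1) p q \<le> 1"
proof (rule ccontr)
  assume "\<not> N (l - 1) p q \<le> 1"
  hence a2: "N (l - 1) p q \<ge> 2" by simp
  define X where "X = l - 1"
  define I where "I = half_idx l"
  note nim = assms(3)[unfolded half_nim_rep_def, folded I_def]
  have finsupp: "\<And>i m. i \<in> I \<Longrightarrow> m \<in> M \<Longrightarrow> finite {m'\<in>M. N i m m' \<noteq> 0}" using nim by blast
  have unit: "\<And>m m'. m \<in> M \<Longrightarrow> m' \<in> M \<Longrightarrow> N 0 m m' = (if m = m' then 1 else 0)" using nim by blast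
  have modl: "\<And>i j m m'. i \<in> I \<Longrightarrow> j \<in> I \<Longrightarrow> m \<in> M \<Longrightarrow> m' \<in> M \<Longrightarrow>
        (\<Sum>m''\<in>{x\<in>M. N j m x \<noteq> 0}. N j m m'' * N i m'' m') = (\<Sum>k\<in>I. half_fus l i j k * N k m m')"
    using nim by blast
  have sym: "\<And>i m m'. i \<in> I \<Longrightarrow> m \<in> M \<Longrightarrow> m' \<in> M \<Longrightarrow> N i m m' = N i m' m" using nim by blast
  have finI: "finite I" unfolding I_def half_idx_def by auto
  have XI: "X \<in> I" unfolding I_def X_def half_idx_def using assms(1) by auto
  have ZI: "0 \<in> I" unfolding I_def half_idx_def by auto
  define S where "S = {x\<in>M. \<exists>j\<in>I. N j p x \<noteq> 0}"
  have S_eq: "S = (\<Union>j\<in>I. {x\<in>M. N j p x \<noteq> 0})" unfolding S_def by auto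
  have finS: "finite S" unfolding S_eq using finI finsupp assms(4) by auto
  have SM: "S \<subseteq> M" unfolding S_def by auto
  have step1: "(\<Sum>m''\<in>S. N j p m'' * N X m'' m') = (\<Sum>k\<in>I. half_fus l X j k * N k p m')"
    if j: "j \<in> I" and m': "m' \<in> M" for j m'
  proof -
    have "(\<Sum>m''\<in>S. N j p m'' * N X m'' m') = (\<Sum>m''\<in>{x\<in>M. N j p x \<noteq> 0}. N j p m'' * N X m'' m')"
      by (rule sum.mono_neutral_right[OF finS]) (use j in \<open>auto simp: S_def\<close>)
    also have "\<dots> = (\<Sum>k\<in>I. half_fus l X j k * N k p m')" by (rule modl[OF XI j assms(4) m'])
    finally show ?thesis .
  qed
  define v where "v m = (\<Sum>j\<in>I. cw l j * N j p m)" for m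
  define T where "T m' = (\<Sum>m''\<in>S. N X m' m'' * v m'')" for m'
  have key: "T m' + 2 * (\<Sum>k\<in>I. N k p m') = 2 * v m'" if m': "m' \<in> M" for m'
  proof -
    have "T m' = (\<Sum>m''\<in>S. \<Sum>j\<in>I. cw l j * (N j p m'' * N X m'' m'))"
      unfolding T_def v_def
    proof (rule sum.cong[OF refl])
      fix m'' assume "m'' \<in> S"
      hence "m'' \<in> M" using SM by auto
      hence "N X m' m'' = N X m'' m'" using sym[OF XI m'] by auto
      thus "N X m' m'' * (\<Sum>j\<in>I. cw l j * N j p m'') = (\<Sum>j\<in>I. cw l j * (N j p m'' * N X m'' m'))"
        by (simp add: sum_distrib_left algebra_simps)
    qed
    also have "\<dots> = (\<Sum>j\<in>I. cw l j * (\<Sum>m''\<in>S. N j p m'' * N X m'' m'))"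
      by (subst sum.swap) (simp add: sum_distrib_left)
    also have "\<dots> = (\<Sum>j\<in>I. cw l j * (\<Sum>k\<in>I. half_fus l X j k * N k p m'))"
      using step1 m' by simp
    also have "\<dots> = (\<Sum>j\<in>I. \<Sum>k\<in>I. cw l j * half_fus l X j k * N k p m')"
      by (simp add: sum_distrib_left mult.assoc)
    also have "\<dots> = (\<Sum>k\<in>I. \<Sum>j\<in>I. cw l j * half_fus l X j k * N k p m')"
      by (rule sum.swap)
    also have "\<dots> = (\<Sum>k\<in>I. (\<Sum>j\<in>I. cw l j * half_fus l X j k) * N k p m')"
      by (simp add: sum_distrib_right)
    finally have "T m' + 2 * (\<Sum>k\<in>I. N k p m') = (\<Sum>k\<in>I. ((\<Sum>j\<in>I. cw l j * half_fus l X j k) + 2) * N k p m')"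
      by (simp add: sum.distrib distrib_right sum_distrib_left[symmetric])
    also have "\<dots> = (\<Sum>k\<in>I. 2 * cw l k * N k p m')"
      using cw_sum[OF assms(1,2)] unfolding I_def X_def by simp
    also have "\<dots> = 2 * v m'" unfolding v_def by (simp add: sum_distrib_left algebra_simps)
    finally show ?thesis .
  qed
  have pS: "p \<in> S" unfolding S_def using ZI unit[OF assms(4) assms(4)] assms(4) by force
  have qS: "q \<in> S" unfolding S_def using XI a2 assms(5) unfolding X_def by force
  have "N X p q * v q \<le> T p" unfolding T_def
    by (rule member_le_sum[OF qS]) (auto intro: finS)
  hence t1: "2 * v q \<le> T p" using a2 unfolding X_def
    by (meson le_trans mult_le_mono1)
  have "N X q p * v p \<le> T q" unfolding T_def
    by (rule member_le_sum[OF pS]) (auto intro: finS)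
  moreover have "N X q p = N X p q" using sym[OF XI assms(5,4)] .
  ultimately have t2: "2 * v p \<le> T q" using a2 unfolding X_def
    by (metis le_trans mult_le_mono1)
  have "N 0 p p \<le> (\<Sum>k\<in>I. N k p p)" by (rule member_le_sum[OF ZI]) (auto intro: finI)
  hence s1: "1 \<le> (\<Sum>k\<in>I. N k p p)" using unit[OF assms(4) assms(4)] by simp
  have k1: "T p + 2 * (\<Sum>k\<in>I. N k p p) = 2 * v p" by (rule key[OF assms(4)])
  have k2: "T q + 2 * (\<Sum>k\<in>I. N k p q) = 2 * v q" by (rule key[OF assms(5)])
  from t1 t2 s1 k1 k2 show False by linarith
qed

end
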